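(* Let $X\subset\mathbb{R}^n$ be a nonempty closed convex set with $X$ unbounded, and let $f(x)=c^Tx+\beta$ with $c\in\mathbb{R}^n$, $\beta\in\mathbb{R}$, be bounded from below on $X$. If $X^\infty\cap\mathcal{K}(f)=\{0\}$, then $0\notin\partial f(\infty)+N(\infty;X)$. (Hence for such $f$ and $X$ the two conditions are equivalent.)
   Context: $X^\infty=\{u:\exists t_k\to+\infty,\ \exists x_k\in X,\ x_k/t_k\to u\}$; $f^\infty(d)=\inf\{\liminf_{k} f(t_kd_k)/t_k:\ t_k\to+\infty,\ d_k\to d\}$; $\mathcal{K}(f)=\{d: f^\infty(d)\le 0\}$. $N(\infty;X)$ is the set of $u$ for which there exist $x_k\in X$, $u_k\in\widehat N(x_k;X)$ with $\|x_k\|\to\infty$ and $u_k\to u$, where $\widehat N(x;X)=\{v:\limsup_{z\to x,\,z\in X}\langle v,z-x\rangle/\|z-x\|\le 0\}$. $\partial f(\infty)$ is the set of $u$ for which there exist $x_k\in\mathbb{R}^n$ and $(u_k,v_k)\in N((x_k,f(x_k));\operatorname{epi}f)$ (limiting normal cone) with $\|x_k\|\to\infty$ and $(u_k,v_k)\to(u,-1)$. *)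

theory Defs
  imports "HOL-Analysis.Analysis"
begin

definition asymptotic_cone :: "'a::real_normed_vector set \<Rightarrow> 'a set" where
  "asymptotic_cone X = {u. \<exists>t x. filterlim t at_top sequentially \<and> (\<forall>k. x k \<in> X) \<and>
      ((\<lambda>k. x k /\<^sub>R t k) \<longlonglongrightarrow> u)}"

definition asymptotic_fun :: "('a::real_normed_vector \<Rightarrow> real) \<Rightarrow> 'a \<Rightarrow> ereal" where
  "asymptotic_fun f d = Inf {Liminf sequentially (\<lambda>k. ereal (f (t k *\<^sub>R dd k) / t k)) | t dd.
      filterlim t at_top sequentially \<and> (dd \<longlonglongrightarrow> d)}"

definition Kf :: "('a::real_normed_vector \<Rightarrow> real) \<Rightarrow> 'a set" where
  "Kf f = {d. asymptotic_fun f d \<le> 0}"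

definition regular_normal :: "'a::real_inner set \<Rightarrow> 'a \<Rightarrow> 'a set" where
  "regular_normal X x = {v. Limsup (at x within X) (\<lambda>z. ereal (inner v (z - x) / norm (z - x))) \<le> 0}"

definition limiting_normal :: "'a::real_inner set \<Rightarrow> 'a \<Rightarrow> 'a set" where
  "limiting_normal X x = {v. \<exists>xs vs. (\<forall>k. xs k \<in> X \<and> vs k \<in> regular_normal X (xs k)) \<and>
      (xs \<longlonglongrightarrow> x) \<and> (vs \<longlonglongrightarrow> v)}"

definition epigraph :: "('a \<Rightarrow> real) \<Rightarrow> ('a \<times> real) set" where
  "epigraph f = {(x, r). f x \<le> r}"

definition normal_infty :: "'a::real_inner set \<Rightarrow> 'a set" where
  "normal_infty X = {u. \<exists>xs us. (\<forall>k. xs k \<in> X \<and> us k \<in> regular_normal X (xs k)) \<and>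
      filterlim (\<lambda>k. norm (xs k)) at_top sequentially \<and> (us \<longlonglongrightarrow> u)}"

definition subdiff_infty :: "('a::real_inner \<Rightarrow> real) \<Rightarrow> 'a set" where
  "subdiff_infty f = {u. \<exists>xs us vs.
      (\<forall>k. (us k, vs k) \<in> limiting_normal (epigraph f) (xs k, f (xs k))) \<and>
      filterlim (\<lambda>k. norm (xs k)) at_top sequentially \<and>
      (us \<longlonglongrightarrow> u) \<and> (vs \<longlonglongrightarrow> -1)}"

end

theory Submission
  imports Defs
begin

lemma conv_normal:
  fixes S :: "'a::real_inner set"
  assumes "convex S" "x \<in> S" "z \<in> S" "w \<in> regular_normal S x"
  shows "inner w (z - x) \<le> 0"
proof (rule ccontr)
  assume neg: "\<not> ?thesis"
  then have zx: "z \<noteq> x" by auto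
  define C where "C = inner w (z-x) / norm (z-x)"
  have Cpos: "C > 0" using neg zx by (simp add: C_def)
  define y where "y j = x + inverse (real (Suc j)) *\<^sub>R (z - x)" for j
  have yS: "y j \<in> S" for j
  proof -
    have "(1 - inverse (real (Suc j))) *\<^sub>R x + inverse (real (Suc j)) *\<^sub>R z \<in> S"
      by (rule convexD_alt[OF assms(1,2,3)]) (auto simp: field_simps)
    moreover have "(1 - inverse (real (Suc j))) *\<^sub>R x + inverse (real (Suc j)) *\<^sub>R z = y j"
      by (simp add: y_def algebra_simps)
    ultimately show ?thesis by simp
  qed
  have yne: "y j \<noteq> x" for j using zx by (simp add: y_def)
  have "(\<lambda>j. inverse (real (Suc j)) *\<^sub>R (z - x)) \<longlonglongrightarrow> 0 *\<^sub>R (z - x)"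
    by (intro tendsto_scaleR LIMSEQ_inverse_real_of_nat tendsto_const)
  then have ylim: "y \<longlonglongrightarrow> x"
    unfolding y_def using tendsto_add[OF tendsto_const[of x]] by fastforce
  have F: "filterlim y (at x within S) sequentially"
    using yS yne ylim by (simp add: filterlim_at)
  have gy: "inner w (y j - x) / norm (y j - x) = C" for j
    using zx by (simp add: y_def C_def)
  have "ereal C \<le> Limsup (at x within S) (\<lambda>z. ereal (inner w (z - x) / norm (z - x)))"
    unfolding Limsup_def
  proof (rule INF_greatest)
    fix P assume "P \<in> {P. eventually P (at x within S)}"
    then have "eventually (\<lambda>j. P (y j)) sequentially" using F by (auto simp: filterlim_iff)
    then obtain N where "\<forall>n\<ge>N. P (y n)" unfolding eventually_sequentially by blast
    then have "P (y N)" by simp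
    then have "ereal (inner w (y N - x) / norm (y N - x)) \<le> (SUP z\<in>Collect P. ereal (inner w (z - x) / norm (z - x)))"
      by (intro SUP_upper) simp
    then show "ereal C \<le> (SUP z\<in>Collect P. ereal (inner w (z - x) / norm (z - x)))"
      using gy by simp
  qed
  then have "ereal C \<le> 0" using assms(4) unfolding regular_normal_def by (meson order_trans mem_Collect_eq)
  then show False using Cpos by simp
qed

lemma epi_convex: "convex (epigraph (\<lambda>x. c \<bullet> x + \<beta>))"
  unfolding convex_def epigraph_def
proof (clarsimp)
  fix a :: 'a and r b s and u v :: real
  assume h: "c \<bullet> a + \<beta> \<le> r" "c \<bullet> b + \<beta> \<le> s" "0 \<le> u" "0 \<le> v" "u + v = 1"
  have "c \<bullet> (u *\<^sub>R a + v *\<^sub>R b) + \<beta> = u * (c \<bullet> a + \<beta>) + v * (c \<bullet> b + \<beta>)"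
  proof -
    have e1: "c \<bullet> (u *\<^sub>R a + v *\<^sub>R b) = u * (c \<bullet> a) + v * (c \<bullet> b)" by (simp add: inner_add_right)
    have e2: "u * \<beta> + v * \<beta> = \<beta>" using h(5) by (simp flip: distrib_right)
    show ?thesis by (simp only: e1 distrib_left) (use e2 in linarith)
  qed
  also have "\<dots> \<le> u * r + v * s" using h by (intro add_mono mult_left_mono) auto
  finally show "c \<bullet> (u *\<^sub>R a + v *\<^sub>R b) + \<beta> \<le> u * r + v * s" .
qed

lemma epi_regular:
  fixes c :: "'a::real_inner"
  assumes "p \<in> epigraph (\<lambda>x. c \<bullet> x + \<beta>)" "(a, b) \<in> regular_normal (epigraph (\<lambda>x. c \<bullet> x + \<beta>)) p"
  shows "a = - b *\<^sub>R c"
proof -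
  obtain y r where p: "p = (y, r)" by force
  have yr: "c \<bullet> y + \<beta> \<le> r" using assms(1) p by (simp add: epigraph_def)
  have key: "a \<bullet> e + b * (c \<bullet> e) = 0" for e
  proof -
    have m1: "(y + e, r + c \<bullet> e) \<in> epigraph (\<lambda>x. c \<bullet> x + \<beta>)"
      using yr by (simp add: epigraph_def inner_add_right)
    have "(a, b) \<bullet> ((y + e, r + c \<bullet> e) - p) \<le> 0"
      by (rule conv_normal[OF epi_convex assms(1) m1 assms(2)])
    then have 1: "a \<bullet> e + b * (c \<bullet> e) \<le> 0" using p by simp
    have m2: "(y - e, r - c \<bullet> e) \<in> epigraph (\<lambda>x. c \<bullet> x + \<beta>)"
      using yr by (simp add: epigraph_def inner_diff_right)
    have "(a, b) \<bullet> ((y - e, r - c \<bullet> e) - p) \<le> 0"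
      by (rule conv_normal[OF epi_convex assms(1) m2 assms(2)])
    then have 2: "- (a \<bullet> e) - b * (c \<bullet> e) \<le> 0" using p by (simp add: inner_diff_right)
    from 1 2 show ?thesis by linarith
  qed
  have "(a + b *\<^sub>R c) \<bullet> (a + b *\<^sub>R c) = 0"
    using key[of "a + b *\<^sub>R c"] by (simp add: inner_add_left inner_commute)
  then have "a + b *\<^sub>R c = 0" by simp
  then show ?thesis by (simp add: eq_neg_iff_add_eq_0)
qed

lemma lim_normal:
  fixes c :: "'a::real_inner"
  assumes "(u, v) \<in> limiting_normal (epigraph (\<lambda>x. c \<bullet> x + \<beta>)) q"
  shows "u = - v *\<^sub>R c"
proof -
  obtain xs vs where h: "\<forall>k. xs k \<in> epigraph (\<lambda>x. c \<bullet> x + \<beta>) \<and> vs k \<in> regular_normal (epigraph (\<lambda>x. c \<bullet> x + \<beta>)) (xs k)"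
    "vs \<longlonglongrightarrow> (u, v)"
    using assms unfolding limiting_normal_def by blast
  have eq: "fst (vs k) = - snd (vs k) *\<^sub>R c" for k
    using epi_regular[of "xs k" c \<beta> "fst (vs k)" "snd (vs k)"] h(1) by simp
  have "(\<lambda>k. fst (vs k)) \<longlonglongrightarrow> u" using tendsto_fst[OF h(2)] by simp
  moreover have "(\<lambda>k. - snd (vs k) *\<^sub>R c) \<longlonglongrightarrow> - v *\<^sub>R c"
    using tendsto_snd[OF h(2)] by (intro tendsto_scaleR tendsto_minus tendsto_const) simp
  moreover have "(\<lambda>k. fst (vs k)) = (\<lambda>k. - snd (vs k) *\<^sub>R c)" using eq by auto
  ultimately show ?thesis using LIMSEQ_unique by auto
qed

lemma subdiff_sub:
  fixes c :: "'a::real_inner"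
  assumes "u \<in> subdiff_infty (\<lambda>x. c \<bullet> x + \<beta>)"
  shows "u = c"
proof -
  obtain xs us vs where h: "\<forall>k. (us k, vs k) \<in> limiting_normal (epigraph (\<lambda>x. c \<bullet> x + \<beta>)) (xs k, c \<bullet> xs k + \<beta>)"
    "us \<longlonglongrightarrow> u" "vs \<longlonglongrightarrow> -1"
    using assms unfolding subdiff_infty_def by blast
  have eq: "us k = - vs k *\<^sub>R c" for k using lim_normal h(1) by blast
  have "(\<lambda>k. - vs k *\<^sub>R c) \<longlonglongrightarrow> - (-1) *\<^sub>R c"
    by (intro tendsto_scaleR tendsto_minus tendsto_const h(3))
  moreover have "us = (\<lambda>k. - vs k *\<^sub>R c)" using eq by auto
  ultimately have "us \<longlonglongrightarrow> c" by simp
  then show ?thesis using h(2) LIMSEQ_unique by blast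
qed

lemma asym_le:
  fixes c :: "'a::real_inner"
  shows "asymptotic_fun (\<lambda>x. c \<bullet> x + \<beta>) d \<le> ereal (c \<bullet> d)"
proof -
  define t where "t k = real (Suc k)" for k
  have tlim: "filterlim t at_top sequentially"
    unfolding t_def by (rule filterlim_compose[OF filterlim_real_sequentially filterlim_Suc])
  have eq: "(c \<bullet> (t k *\<^sub>R d) + \<beta>) / t k = c \<bullet> d + \<beta> * inverse (t k)" for k
    by (simp add: t_def field_simps inner_add_right)
  have "(\<lambda>k. c \<bullet> d + \<beta> * inverse (t k)) \<longlonglongrightarrow> c \<bullet> d + \<beta> * 0"
    unfolding t_def by (intro tendsto_add tendsto_mult tendsto_const LIMSEQ_inverse_real_of_nat)
  then have "(\<lambda>k. ereal ((c \<bullet> (t k *\<^sub>R d) + \<beta>) / t k)) \<longlonglongrightarrow> ereal (c \<bullet> d)"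
    unfolding eq by (simp add: lim_ereal)
  then have L: "Liminf sequentially (\<lambda>k. ereal ((c \<bullet> (t k *\<^sub>R d) + \<beta>) / t k)) = ereal (c \<bullet> d)"
    by (intro lim_imp_Liminf) simp_all
  have "Liminf sequentially (\<lambda>k. ereal ((c \<bullet> (t k *\<^sub>R (\<lambda>k. d) k) + \<beta>) / t k)) \<in>
     {Liminf sequentially (\<lambda>k. ereal ((\<lambda>x. c \<bullet> x + \<beta>) (t k *\<^sub>R dd k) / t k)) | t dd.
      filterlim t at_top sequentially \<and> (dd \<longlonglongrightarrow> d)}"
    apply (rule CollectI)
    apply (rule exI[of _ t])
    apply (rule exI[of _ "\<lambda>k. d"])
    using tlim by simp
  then have "asymptotic_fun (\<lambda>x. c \<bullet> x + \<beta>) d \<le> Liminf sequentially (\<lambda>k. ereal ((c \<bullet> (t k *\<^sub>R (\<lambda>k. d) k) + \<beta>) / t k))"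
    unfolding asymptotic_fun_def by (rule Inf_lower)
  then show ?thesis using L by simp
qed

theorem mainTheorem3:
  fixes X :: "'a::euclidean_space set" and c :: 'a and \<beta> :: real
  assumes "X \<noteq> {}" and "closed X" and "convex X" and "\<not> bounded X"
    and "\<exists>m. \<forall>x\<in>X. m \<le> c \<bullet> x + \<beta>"
    and "asymptotic_cone X \<inter> Kf (\<lambda>x. c \<bullet> x + \<beta>) = {0}"
  shows "0 \<notin> {a + b | a b. a \<in> subdiff_infty (\<lambda>x. c \<bullet> x + \<beta>) \<and> b \<in> normal_infty X}"
proof
  assume "0 \<in> {a + b | a b. a \<in> subdiff_infty (\<lambda>x. c \<bullet> x + \<beta>) \<and> b \<in> normal_infty X}"
  then obtain a b where ab: "0 = a + b" "a \<in> subdiff_infty (\<lambda>x. c \<bullet> x + \<beta>)" "b \<in> normal_infty X"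
    by blast
  have "a = c" using subdiff_sub ab(2) by blast
  then have bc: "b = - c" using ab(1) by (simp add: eq_neg_iff_add_eq_0 add.commute)
  obtain xs us where h: "\<forall>k. xs k \<in> X \<and> us k \<in> regular_normal X (xs k)"
    "filterlim (\<lambda>k. norm (xs k)) at_top sequentially" "us \<longlonglongrightarrow> - c"
    using ab(3) bc unfolding normal_infty_def by blast
  obtain z0 where z0: "z0 \<in> X" using assms(1) by blast
  define t where "t k = max 1 (norm (xs k))" for k
  have tlim: "filterlim t at_top sequentially"
    unfolding t_def by (rule filterlim_at_top_mono[OF h(2)]) auto
  have tpos: "t k > 0" for k unfolding t_def by simp
  have inb: "xs k /\<^sub>R t k \<in> cball 0 1" for k
    using tpos[of k] by (auto simp: t_def divide_simps)
  obtain d r where d: "d \<in> cball 0 1" "strict_mono r" "((\<lambda>k. xs k /\<^sub>R t k) \<circ> r) \<longlonglongrightarrow> d"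
    using seq_compactE[OF compact_imp_seq_compact[OF compact_cball[of "0::'a" 1]], of "\<lambda>k. xs k /\<^sub>R t k"] inb
    by blast
  have tr: "filterlim (t \<circ> r) at_top sequentially"
    using filterlim_compose[OF tlim filterlim_subseq[OF d(2)]] by (simp add: comp_def)
  have dX: "d \<in> asymptotic_cone X"
    unfolding asymptotic_cone_def
    apply (rule CollectI)
    apply (rule exI[of _ "t \<circ> r"])
    apply (rule exI[of _ "xs \<circ> r"])
    using tr h(1) d(3) by (simp add: comp_def)
  have ev1: "eventually (\<lambda>k. norm ((xs k /\<^sub>R t k)) = 1) sequentially"
  proof -
    have "eventually (\<lambda>k. norm (xs k) \<ge> 1) sequentially"
      using h(2) by (simp add: filterlim_at_top)
    moreover have "norm (x /\<^sub>R max 1 (norm x)) = 1" if "1 \<le> norm x" for x :: 'a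
    proof -
      have "norm x \<noteq> 0" using that by linarith
      then show ?thesis using that by (simp add: max_def)
    qed
    ultimately show ?thesis unfolding t_def by (auto elim: eventually_mono)
  qed
  have E: "eventually (\<lambda>k. norm (((\<lambda>k. xs k /\<^sub>R t k) \<circ> r) k) = (\<lambda>k. 1::real) k) sequentially"
    using eventually_subseq[OF d(2) ev1] by (simp add: comp_def)
  have L: "(\<lambda>k. norm (((\<lambda>k. xs k /\<^sub>R t k) \<circ> r) k)) \<longlonglongrightarrow> norm d"
    by (intro tendsto_norm d(3))
  have "(\<lambda>k. 1::real) \<longlonglongrightarrow> norm d"
    by (rule Lim_transform_eventually[OF L E])
  then have "1 = norm d" by (rule LIMSEQ_unique[OF tendsto_const])
  then have "norm d = 1" by simp
  then have "d \<noteq> 0" by auto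
  then have "d \<notin> Kf (\<lambda>x. c \<bullet> x + \<beta>)" using assms(6) dX by blast
  then have "\<not> asymptotic_fun (\<lambda>x. c \<bullet> x + \<beta>) d \<le> 0" unfolding Kf_def by simp
  then have "0 < asymptotic_fun (\<lambda>x. c \<bullet> x + \<beta>) d" by (simp add: not_le)
  then have "0 < ereal (c \<bullet> d)" using asym_le[of c \<beta> d] by (rule less_le_trans)
  then have cd: "c \<bullet> d > 0" by simp
  have ineq: "us (r k) \<bullet> z0 / t (r k) \<le> us (r k) \<bullet> (xs (r k) /\<^sub>R t (r k))" for k
  proof -
    have "us (r k) \<bullet> (z0 - xs (r k)) \<le> 0"
      using conv_normal[OF assms(3) conjunct1[OF spec[OF h(1)]] z0 conjunct2[OF spec[OF h(1)]]] .
    then have "us (r k) \<bullet> z0 \<le> us (r k) \<bullet> xs (r k)" by (simp add: inner_diff_right)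
    then have "us (r k) \<bullet> z0 / t (r k) \<le> us (r k) \<bullet> xs (r k) / t (r k)"
      by (rule divide_right_mono) (use tpos[of "r k"] in simp)
    then show ?thesis by (simp only: inner_scaleR_right divide_inverse_commute)
  qed
  have usr: "(us \<circ> r) \<longlonglongrightarrow> - c" using LIMSEQ_subseq_LIMSEQ[OF h(3) d(2)] .
  have it: "(\<lambda>k. inverse (t (r k))) \<longlonglongrightarrow> 0"
    using tendsto_inverse_0_at_top[OF tr] by (simp add: comp_def)
  have l1: "(\<lambda>k. us (r k) \<bullet> z0 / t (r k)) \<longlonglongrightarrow> (- c) \<bullet> z0 * 0"
    using tendsto_mult[OF tendsto_inner[OF usr tendsto_const[of z0]] it]
    by (simp add: comp_def divide_inverse)
  have l2: "(\<lambda>k. us (r k) \<bullet> (xs (r k) /\<^sub>R t (r k))) \<longlonglongrightarrow> (- c) \<bullet> d"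
    using tendsto_inner[OF usr d(3)] by (simp add: comp_def)
  have "(- c) \<bullet> z0 * 0 \<le> (- c) \<bullet> d"
    by (rule LIMSEQ_le[OF l1 l2]) (use ineq in auto)
  then show False using cd by simp
qed

end
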